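(* In an operational probabilistic theory, let $\mathrm{A},\mathrm{B}$ be systems with $\mathsf{Transf}_{\mathbb{R}}(\mathrm{A}\to\mathrm{B})$ finite-dimensional. Then there exist an integer $N\ge1$, systems $\mathrm{E}_1,\dots,\mathrm{E}_N$ and states $\rho_i\in\mathsf{St}(\mathrm{A}\otimes\mathrm{E}_i)$, $i=1,\dots,N$, such that $(\rho_1,\dots,\rho_N)$ is tomographically faithful for $\mathsf{Transf}(\mathrm{A}\to\mathrm{B})$.
   Context: Operational probabilistic theory: systems closed under $\otimes$; sets $\mathsf{Transf}(\mathrm{A}\to\mathrm{B})$ closed under $\circ$ and $\otimes$; states $\mathsf{St}(\mathrm{A})$ spanning a real vector space $\mathsf{St}_{\mathbb{R}}(\mathrm{A})$; transformations identified when they give equal probabilities in all circuits. A transformation $\mathcal{T}$ is identified with the family of linear maps $\widehat{\mathcal{T}\otimes\mathcal{I}_{\mathrm{E}}}:\mathsf{St}_{\mathbb{R}}(\mathrm{A}\otimes\mathrm{E})\to\mathsf{St}_{\mathbb{R}}(\mathrm{B}\otimes\mathrm{E})$ over all systems $\mathrm{E}$, and $\mathsf{Transf}_{\mathbb{R}}(\mathrm{A}\to\mathrm{B})$ is the real vector space spanned by transformations in this representation (no local tomography is assumed). A tuple $(\rho_1,\dots,\rho_N)$ with $\rho_i\in\mathsf{St}(\mathrm{A}\otimes\mathrm{E}_i)$ is tomographically faithful for $\mathsf{Transf}(\mathrm{A}\to\mathrm{B})$ if for all $\mathcal{T},\mathcal{T}'\in\mathsf{Transf}(\mathrm{A}\to\mathrm{B})$,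 $(\mathcal{T}'\otimes\mathcal{I}_{\mathrm{E}_i})(\rho_i)=(\mathcal{T}\otimes\mathcal{I}_{\mathrm{E}_i})(\rho_i)$ for all $i$ implies $\mathcal{T}'=\mathcal{T}$. *)

theory Defs
  imports "HOL-Analysis.Analysis" "HOL-Library.Function_Algebras"
begin

text \<open>
Abstract rendering of an operational probabilistic theory (OPT), restricted to the
data used in the statement.
  \<^item> 's is the type of systems, tens A B is the composite system A \<otimes> B;
  \<^item> all state sets live in an ambient real vector space 'v; St A is the set of
    states of A and St_R(A) = span (St A);
  \<^item> a transformation T : A \<rightarrow> B is identified with its family of linear maps
    E \<mapsto> (T \<otimes> I_E)^ : St_R(A\<otimes>E) \<rightarrow> St_R(B\<otimes>E); we represent it as
    a function T :: 's \<Rightarrow> 'v \<Rightarrow> 'v with T E x = (T \<otimes> I_E)(x) for x in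
    St_R(A \<otimes> E), normalised to 0 outside St_R(A\<otimes>E), so that equality of
    transformations is equality of these families;
  \<^item> Transf A B is the set of transformations from A to B (in this representation).
\<close>

type_synonym ('s, 'v) tfam = "'s \<Rightarrow> 'v \<Rightarrow> 'v"

definition opt_rep ::
  "('s \<Rightarrow> 's \<Rightarrow> 's) \<Rightarrow> ('s \<Rightarrow> 'v::real_vector set) \<Rightarrow> ('s \<Rightarrow> 's \<Rightarrow> ('s, 'v) tfam set) \<Rightarrow> bool"
where
  "opt_rep tens St Transf \<longleftrightarrow>
     (\<forall>A. St A \<noteq> {}) \<and>
     (\<forall>A B T E. T \<in> Transf A B \<longrightarrow>
        (\<forall>x\<in>span (St (tens A E)). \<forall>y\<in>span (St (tens A E)). \<forall>c.
            T E (x + y) = T E x + T E y \<and> T E (c *\<^sub>R x) = c *\<^sub>R T E x) \<and>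
        (\<forall>x\<in>span (St (tens A E)). T E x \<in> span (St (tens B E))) \<and>
        (\<forall>x. x \<notin> span (St (tens A E)) \<longrightarrow> T E x = 0))"

text \<open>Scalar multiplication on families (pointwise); with pointwise addition from
Function_Algebras this makes families a real vector space.\<close>
definition fscale :: "real \<Rightarrow> ('s, 'v::real_vector) tfam \<Rightarrow> ('s, 'v) tfam" where
  "fscale c F = (\<lambda>E x. c *\<^sub>R F E x)"

definition TransfR ::
  "('s \<Rightarrow> 's \<Rightarrow> ('s, 'v::real_vector) tfam set) \<Rightarrow> 's \<Rightarrow> 's \<Rightarrow> ('s, 'v) tfam set" where
  "TransfR Transf A B = module.span fscale (Transf A B)"

definition fin_dim_fam :: "('s, 'v::real_vector) tfam set \<Rightarrow> bool" where
  "fin_dim_fam V \<longleftrightarrow> (\<exists>S. finite S \<and> S \<subseteq> V \<and> module.span fscale S = V)"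

definition tomo_faithful ::
  "('s \<Rightarrow> 's \<Rightarrow> 's) \<Rightarrow> ('s \<Rightarrow> 's \<Rightarrow> ('s, 'v) tfam set) \<Rightarrow> 's \<Rightarrow> 's
    \<Rightarrow> nat \<Rightarrow> (nat \<Rightarrow> 's) \<Rightarrow> (nat \<Rightarrow> 'v) \<Rightarrow> bool" where
  "tomo_faithful tens Transf A B N E \<rho> \<longleftrightarrow>
     (\<forall>T\<in>Transf A B. \<forall>T'\<in>Transf A B.
        (\<forall>i\<in>{1..N}. T' (E i) (\<rho> i) = T (E i) (\<rho> i)) \<longrightarrow> T' = T)"

end

theory Submission
  imports Defs
begin

lemma module_fscale: "module (fscale :: real \<Rightarrow> ('s, 'v::real_vector) tfam \<Rightarrow> _)"
  by unfold_locales (auto simp: fscale_def plus_fun_def scaleR_add_right scaleR_add_left)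

lemma fscale_apply: "fscale c F E x = c *\<^sub>R F E x"
  by (simp add: fscale_def)

definition LinF :: "('s \<Rightarrow> 's \<Rightarrow> 's) \<Rightarrow> ('s \<Rightarrow> 'v::real_vector set) \<Rightarrow> 's \<Rightarrow> ('s, 'v) tfam \<Rightarrow> bool" where
  "LinF tens St A F \<longleftrightarrow> (\<forall>E.
        (\<forall>x\<in>span (St (tens A E)). \<forall>y\<in>span (St (tens A E)). \<forall>c.
            F E (x + y) = F E x + F E y \<and> F E (c *\<^sub>R x) = c *\<^sub>R F E x) \<and>
        (\<forall>x. x \<notin> span (St (tens A E)) \<longrightarrow> F E x = 0))"

lemma LinF_subspace: "module.subspace fscale {F. LinF tens St A F}"
  unfolding module.subspace_def[OF module_fscale]
  by (auto simp: LinF_def fscale_def scaleR_add_right algebra_simps)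

lemma LinF_span:
  assumes "opt_rep tens St Transf"
  shows "TransfR Transf A B \<subseteq> {F. LinF tens St A F}"
  unfolding TransfR_def
  apply (rule module.span_minimal[OF module_fscale _ LinF_subspace])
  using assms by (auto simp: opt_rep_def LinF_def)

lemma LinF_nonzero:
  assumes L: "LinF tens St A F" and nz: "F \<noteq> 0"
  shows "\<exists>E \<rho>. \<rho> \<in> St (tens A E) \<and> F E \<rho> \<noteq> 0"
proof (rule ccontr)
  assume H: "\<not> ?thesis"
  have "F = 0"
  proof (rule ext, rule ext)
    fix E x
    let ?S = "span (St (tens A E))"
    have lin: "\<forall>x\<in>?S. \<forall>y\<in>?S. \<forall>c. F E (x + y) = F E x + F E y \<and> F E (c *\<^sub>R x) = c *\<^sub>R F E x"
      and out: "\<forall>x. x \<notin> ?S \<longrightarrow> F E x = 0" using L by (auto simp: LinF_def)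
    have "?S \<subseteq> {x \<in> ?S. F E x = 0}"
    proof (rule span_minimal)
      show "St (tens A E) \<subseteq> {x \<in> ?S. F E x = 0}" using H by (auto intro: span_base)
      have z: "F E 0 = 0" using lin span_zero[of "St (tens A E)"]
        by (metis scale_zero_left)
      show "subspace {x \<in> ?S. F E x = 0}"
        unfolding subspace_def using lin z span_zero[of "St (tens A E)"] by (auto intro: span_add span_scale)
    qed
    then show "F E x = 0 E x" using out by (cases "x \<in> ?S") auto
  qed
  with nz show False by simp
qed

definition vanish :: "('s \<times> 'v) set \<Rightarrow> ('s, 'v::real_vector) tfam \<Rightarrow> bool" where
  "vanish P F \<longleftrightarrow> (\<forall>q\<in>P. F (fst q) (snd q) = 0)"

lemma key_induct:
  assumes "finite S"
  shows "S \<subseteq> {F. LinF tens St A F} \<Longrightarrow> \<exists>P. finite P \<and> (\<forall>q\<in>P. snd q \<in> St (tens A (fst q))) \<and>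
     (\<forall>F\<in>module.span fscale S. vanish P F \<longrightarrow> F = 0)"
  using assms
proof (induction S rule: finite_induct)
  case empty
  show ?case
    by (rule exI[of _ "{}"]) (simp add: module.span_empty[OF module_fscale])
next
  case (insert s S)
  note M = module_fscale
  have "S \<subseteq> {F. LinF tens St A F}" using insert.prems by simp
  from insert.IH[OF this] obtain P where P0: "finite P \<and> (\<forall>q\<in>P. snd q \<in> St (tens A (fst q))) \<and>
    (\<forall>F\<in>module.span fscale S. vanish P F \<longrightarrow> F = 0)" ..
  note P = conjunct1[OF P0] conjunct1[OF conjunct2[OF P0]] conjunct2[OF conjunct2[OF P0]]
  have spL: "module.span fscale (insert s S) \<subseteq> {F. LinF tens St A F}"
    by (rule module.span_minimal[OF M _ LinF_subspace]) (use insert in auto)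
  show ?case
  proof (cases "\<forall>F\<in>module.span fscale (insert s S). vanish P F \<longrightarrow> F = 0")
    case True then show ?thesis using P by blast
  next
    case False
    then obtain w where w: "w \<in> module.span fscale (insert s S)" "vanish P w" "w \<noteq> 0" by blast
    have "LinF tens St A w" using w spL by auto
    from LinF_nonzero[OF this w(3)] obtain E \<rho> where q: "\<rho> \<in> St (tens A E)" "w E \<rho> \<noteq> 0"
      by blast
    show ?thesis
    proof (intro exI conjI)
      show "finite (insert (E, \<rho>) P)" using P by simp
      show "\<forall>q\<in>insert (E, \<rho>) P. snd q \<in> St (tens A (fst q))" using P q by auto
      show "\<forall>F\<in>module.span fscale (insert s S). vanish (insert (E, \<rho>) P) F \<longrightarrow> F = 0"
      proof (intro ballI impI)
        fix F assume F: "F \<in> module.span fscale (insert s S)" "vanish (insert (E, \<rho>) P) F"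
        obtain c where c: "F - fscale c s \<in> module.span fscale S"
          using F(1) unfolding module.span_breakdown_eq[OF M, of F s S] by (elim exE)
        obtain d where d: "w - fscale d s \<in> module.span fscale S"
          using w(1) unfolding module.span_breakdown_eq[OF M, of w s S] by (elim exE)
        have d0: "d \<noteq> 0"
        proof
          assume "d = 0"
          have "w = 0"
          proof -
          have "w - fscale d s = w" using \<open>d = 0\<close> by (simp add: fscale_def fun_eq_iff)
          then have "w \<in> module.span fscale S" using d by simp
          then show "w = 0" using w(2) P(3) by blast
          qed
          with w(3) show False by simp
        qed
        let ?G = "(F - fscale c s) - fscale (c/d) (w - fscale d s)"
        have G: "?G \<in> module.span fscale S"
          using module.span_diff[OF M c module.span_scale[OF M d]] .
        have Geq: "?G = F - fscale (c/d) w"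
          using d0 by (auto simp: fscale_def fun_eq_iff algebra_simps)
        have "vanish P ?G" unfolding Geq using F(2) w(2)
          by (auto simp: vanish_def fscale_def)
        then have "?G = 0" using G P(3) by blast
        then have Fw: "F = fscale (c/d) w" unfolding Geq by simp
        have "(c/d) *\<^sub>R w E \<rho> = 0" using F(2) unfolding Fw by (auto simp add: vanish_def fscale_def)
        then have "c/d = 0" using q(2) by simp
        then show "F = 0" unfolding Fw by (simp add: fscale_def fun_eq_iff)
      qed
    qed
  qed
qed

theorem mainTheorem8:
  fixes tens :: "'s \<Rightarrow> 's \<Rightarrow> 's"
    and St :: "'s \<Rightarrow> 'v::real_vector set"
    and Transf :: "'s \<Rightarrow> 's \<Rightarrow> ('s, 'v) tfam set"
    and A B :: 's
  assumes "opt_rep tens St Transf"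
    and "fin_dim_fam (TransfR Transf A B)"
  shows "\<exists>N::nat. N \<ge> 1 \<and> (\<exists>E::nat \<Rightarrow> 's. \<exists>\<rho>::nat \<Rightarrow> 'v.
           (\<forall>i\<in>{1..N}. \<rho> i \<in> St (tens A (E i))) \<and>
           tomo_faithful tens Transf A B N E \<rho>)"
proof -
  note M = module_fscale
  obtain S where S: "finite S" "S \<subseteq> TransfR Transf A B" "module.span fscale S = TransfR Transf A B"
    using assms(2) by (auto simp: fin_dim_fam_def)
  have "S \<subseteq> {F. LinF tens St A F}" using S(2) LinF_span[OF assms(1)] by blast
  then obtain P where P: "finite P" "\<forall>q\<in>P. snd q \<in> St (tens A (fst q))"
    "\<forall>F\<in>TransfR Transf A B. vanish P F \<longrightarrow> F = 0"
    using key_induct[OF S(1)] S(3) by metis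
  have "St (tens A A) \<noteq> {}" using assms(1) by (simp add: opt_rep_def)
  then obtain r0 where r0: "r0 \<in> St (tens A A)" by blast
  define P' where "P' = insert (A, r0) P"
  obtain xs where xs: "set xs = P'" using P(1) finite_list unfolding P'_def by blast
  define N where "N = length xs"
  define E where "E = (\<lambda>i. fst (xs ! (i - 1)))"
  define \<rho> where "\<rho> = (\<lambda>i. snd (xs ! (i - 1)))"
  have N1: "N \<ge> 1" using xs unfolding N_def P'_def
    by (cases xs) auto
  have valid: "\<forall>q\<in>P'. snd q \<in> St (tens A (fst q))" using P(2) r0 by (auto simp: P'_def)
  have cover: "\<forall>q\<in>P. \<exists>i\<in>{1..N}. q = (E i, \<rho> i)"
  proof
    fix q assume "q \<in> P"
    then have "q \<in> set xs" using xs P'_def by auto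
    then obtain j where j: "j < length xs" "xs ! j = q" by (auto simp: in_set_conv_nth)
    show "\<exists>i\<in>{1..N}. q = (E i, \<rho> i)"
      by (rule bexI[of _ "Suc j"]) (use j in \<open>auto simp: E_def \<rho>_def N_def\<close>)
  qed
  have st: "\<forall>i\<in>{1..N}. \<rho> i \<in> St (tens A (E i))"
  proof
    fix i assume "i \<in> {1..N}"
    then have "xs ! (i - 1) \<in> P'" using xs unfolding N_def by auto
    then show "\<rho> i \<in> St (tens A (E i))" using valid by (auto simp: E_def \<rho>_def)
  qed
  have tf: "tomo_faithful tens Transf A B N E \<rho>"
    unfolding tomo_faithful_def
  proof (intro ballI impI)
    fix T T' assume T: "T \<in> Transf A B" "T' \<in> Transf A B"
      and eq: "\<forall>i\<in>{1..N}. T' (E i) (\<rho> i) = T (E i) (\<rho> i)"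
    have "T' - T \<in> TransfR Transf A B"
      unfolding TransfR_def using T module.span_diff[OF M] module.span_base[OF M] by blast
    moreover have "vanish P (T' - T)"
      unfolding vanish_def
    proof
      fix q assume "q \<in> P"
      then obtain i where "i \<in> {1..N}" "q = (E i, \<rho> i)" using cover by blast
      then show "(T' - T) (fst q) (snd q) = 0" using eq by simp
    qed
    ultimately have "T' - T = 0" using P(3) by blast
    then show "T' = T" by simp
  qed
  show ?thesis using N1 st tf by blast
qed

end
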